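(* Let $N\ge 1$, $M\ge 1$, let $x_1,\dots,x_N\in\mathbb{R}^M$, $y_1,\dots,y_N\in\mathbb{R}$, and let $X_N\in\mathbb{R}^{N\times M}$ be the matrix with rows $x_n^\top$ and $Y_N=(y_1,\dots,y_N)^\top$. Assume $X_N^\top X_N$ is invertible, and let $\theta_N=(X_N^\top X_N)^{-1}X_N^\top Y_N$. Fix a test vector $x\in\mathbb{R}^M$ and $\sigma>0$. For each $y\in\mathbb{R}$ let $$\hat\theta(y)=\arg\min_{\theta\in\mathbb{R}^M}\Big[\sum_{n=1}^N (y_n-x_n^\top\theta)^2+(y-x^\top\theta)^2\Big]$$ (the genie). Put $P_N=\dfrac{(X_N^\top X_N)^{-1}}{1+x^\top (X_N^\top X_N)^{-1}x}$. Then: (i) $y-x^\top\hat\theta(y)=(1-x^\top P_N x)(y-x^\top\theta_N)$ for every $y$; (ii) the normalization factor $K=\int_{\mathbb{R}} p_{\hat\theta(y')}(y'\mid x)\,dy'$ equals $$K=\frac{1}{1-x^\top P_N x}=1+x^\top (X_N^\top X_N)^{-1}x,$$ so the min-max regret is $\Gamma=\log K=\log\big(1+x^\top(X_N^\top X_N)^{-1}x\big)$; (iii) the pNML distribution $q_{\mathrm{pNML}}(y\mid x)=p_{\hat\theta(y)}(y\mid x)/K$ is $$q_{\mathrm{pNML}}(y\mid x)=\frac{1-x^\top P_N x}{\sqrt{2\pi\sigma^2}}\exp\Big\{-\frac{(1-x^\top P_N x)^2}{2\sigma^2}(y-x^\top\theta_N)^2\Big\},$$ i.e. a Gaussian with mean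 $x^\top\theta_N$ and variance $\sigma^2K^2$.
   Context: The hypothesis class is the Gaussian linear model $p_\theta(y\mid x)=\frac{1}{\sqrt{2\pi\sigma^2}}\exp\{-\frac{1}{2\sigma^2}(y-x^\top\theta)^2\}$, $\theta\in\mathbb{R}^M$. The pNML (predictive normalized maximum likelihood) learner is $q_{\mathrm{pNML}}(y\mid x)=p_{\hat\theta(y)}(y\mid x)/\int p_{\hat\theta(y')}(y'\mid x)\,dy'$, where $\hat\theta(y)$ is the genie: the hypothesis maximizing the likelihood of the training set together with the test pair $(x,y)$. *)

theory Defs
  imports "HOL-Analysis.Analysis" "HOL-Probability.Probability"
begin

(* Training data: X :: real^'m^'n has rows X $ n = x_n (N = CARD('n), M = CARD('m)),
   Y :: real^'n the labels. *)

definition gauss_lik :: "real \<Rightarrow> real^'m \<Rightarrow> real^'m \<Rightarrow> real \<Rightarrow> real" where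
  "gauss_lik \<sigma> x \<theta> y = 1 / sqrt (2 * pi * \<sigma>\<^sup>2) * exp (- ((y - x \<bullet> \<theta>)\<^sup>2) / (2 * \<sigma>\<^sup>2))"

definition genie_loss :: "real^'m^'n::finite \<Rightarrow> real^'n \<Rightarrow> real^'m \<Rightarrow> real \<Rightarrow> real^'m \<Rightarrow> real" where
  "genie_loss X Y x y \<theta> = (\<Sum>n\<in>UNIV. (Y $ n - (X $ n) \<bullet> \<theta>)\<^sup>2) + (y - x \<bullet> \<theta>)\<^sup>2"

definition genie :: "real^'m^'n::finite \<Rightarrow> real^'n \<Rightarrow> real^'m \<Rightarrow> real \<Rightarrow> real^'m" where
  "genie X Y x y = (ARG_MIN (genie_loss X Y x y) \<theta>. True)"

definition ls_estimate :: "real^'m^'n::finite \<Rightarrow> real^'n \<Rightarrow> real^'m" where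
  "ls_estimate X Y = matrix_inv (transpose X ** X) *v (transpose X *v Y)"

definition P_mat :: "real^'m^'n::finite \<Rightarrow> real^'m \<Rightarrow> real^'m^'m" where
  "P_mat X x = (1 / (1 + x \<bullet> (matrix_inv (transpose X ** X) *v x))) *\<^sub>R matrix_inv (transpose X ** X)"

definition pnml_norm :: "real \<Rightarrow> real^'m^'n::finite \<Rightarrow> real^'n \<Rightarrow> real^'m \<Rightarrow> real" where
  "pnml_norm \<sigma> X Y x = (\<integral>y'. gauss_lik \<sigma> x (genie X Y x y') y' \<partial>lborel)"

definition pnml :: "real \<Rightarrow> real^'m^'n::finite \<Rightarrow> real^'n \<Rightarrow> real^'m \<Rightarrow> real \<Rightarrow> real" where
  "pnml \<sigma> X Y x y = gauss_lik \<sigma> x (genie X Y x y) y / pnml_norm \<sigma> X Y x"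

end

theory Submission imports Defs begin

lemma minv: assumes "invertible (A::real^'n^'n)"
  shows "A ** matrix_inv A = mat 1" "matrix_inv A ** A = mat 1"
  using someI_ex[OF assms[unfolded invertible_def]] unfolding matrix_inv_def by auto

lemma minv_v: assumes "invertible (A::real^'n^'n)"
  shows "A *v (matrix_inv A *v v) = v" "matrix_inv A *v (A *v v) = v"
  by (simp_all add: matrix_vector_mul_assoc minv[OF assms])

lemma tX_sum: "transpose (X::real^'m^'n) *v v = (\<Sum>n\<in>UNIV. v$n *\<^sub>R X$n)"
  by (simp add: vec_eq_iff vector_matrix_mult_def sum_component)

lemma Xv_comp: "(X *v (t::real^'m)) $ n = X$n \<bullet> t"
  by (simp add: matrix_vector_mult_def inner_vec_def mult.commute)

lemma loss_decomp:
  fixes X :: "real^'m::finite^'n::finite"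
  assumes G: "(\<Sum>n\<in>UNIV. (Y$n - X$n \<bullet> ts) *\<^sub>R X$n) + (y - x \<bullet> ts) *\<^sub>R x = 0"
  shows "genie_loss X Y x y t = genie_loss X Y x y ts + ((\<Sum>n\<in>UNIV. (X$n \<bullet> (ts - t))\<^sup>2) + (x \<bullet> (ts - t))\<^sup>2)"
proof -
  define d where "d = ts - t"
  have t: "t = ts - d" by (simp add: d_def)
  have "0 = ((\<Sum>n\<in>UNIV. (Y$n - X$n \<bullet> ts) *\<^sub>R X$n) + (y - x \<bullet> ts) *\<^sub>R x) \<bullet> d"
    using G by simp
  also have "\<dots> = (\<Sum>n\<in>UNIV. (Y$n - X$n \<bullet> ts) * (X$n \<bullet> d)) + (y - x \<bullet> ts) * (x \<bullet> d)"
    by (simp add: inner_add_left inner_sum_left)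
  finally have z: "(\<Sum>n\<in>UNIV. (Y$n - X$n \<bullet> ts) * (X$n \<bullet> d)) + (y - x \<bullet> ts) * (x \<bullet> d) = 0" by simp
  have e: "\<And>u v w. (u - v \<bullet> (ts - d))\<^sup>2 = (u - v \<bullet> ts)\<^sup>2 + 2 * ((u - v \<bullet> ts) * (v \<bullet> d)) + (v \<bullet> d)\<^sup>2"
    by (simp add: inner_diff_right power2_eq_square algebra_simps)
  have L: "genie_loss X Y x y t = (\<Sum>n\<in>UNIV. (Y$n - X$n \<bullet> ts)\<^sup>2 + 2 * ((Y$n - X$n \<bullet> ts) * (X$n \<bullet> d)) + (X$n \<bullet> d)\<^sup>2) +
      ((y - x \<bullet> ts)\<^sup>2 + 2 * ((y - x \<bullet> ts) * (x \<bullet> d)) + (x \<bullet> d)\<^sup>2)"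
    unfolding genie_loss_def t e by simp
  have "(\<Sum>n\<in>UNIV. (Y$n - X$n \<bullet> ts)\<^sup>2 + 2 * ((Y$n - X$n \<bullet> ts) * (X$n \<bullet> d)) + (X$n \<bullet> d)\<^sup>2)
      = (\<Sum>n\<in>UNIV. (Y$n - X$n \<bullet> ts)\<^sup>2) + 2 * (\<Sum>n\<in>UNIV. (Y$n - X$n \<bullet> ts) * (X$n \<bullet> d)) + (\<Sum>n\<in>UNIV. (X$n \<bullet> d)\<^sup>2)"
      by (simp add: sum.distrib sum_distrib_left)
  then show ?thesis unfolding L d_def[symmetric] using z by (simp add: genie_loss_def)
qed

lemma genie_formula:
  fixes X :: "real^'m::finite^'n::finite" and Y :: "real^'n" and x :: "real^'m"
  assumes inv: "invertible (transpose X ** X)"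
  defines "Ai \<equiv> matrix_inv (transpose X ** X)"
  defines "z \<equiv> Ai *v x" and "a \<equiv> x \<bullet> (Ai *v x)" and "\<mu> \<equiv> x \<bullet> ls_estimate X Y"
  shows "a \<ge> 0" "genie X Y x y = ls_estimate X Y + ((y - \<mu>) / (1 + a)) *\<^sub>R z"
proof -
  let ?A = "transpose X ** X"
  have xz: "?A *v z = x" unfolding z_def Ai_def by (rule minv_v(1)[OF inv])
  have "a = (?A *v z) \<bullet> z" using xz unfolding a_def z_def by simp
  also have "\<dots> = (X *v z) \<bullet> (X *v z)"
    by (simp add: matrix_vector_mul_assoc[symmetric] dot_lmul_matrix)
  finally show a0: "a \<ge> 0" by simp
  define c where "c = (y - \<mu>) / (1 + a)"
  define ts where "ts = ls_estimate X Y + c *\<^sub>R z"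
  have Ats: "?A *v ts = transpose X *v Y + c *\<^sub>R x"
    unfolding ts_def ls_estimate_def matrix_vector_right_distrib matrix_vector_mult_scaleR xz
    using minv_v(1)[OF inv] by simp
  have r: "y - x \<bullet> ts = c"
  proof -
    have "y - x \<bullet> ts = y - \<mu> - c * a" unfolding ts_def \<mu>_def a_def z_def by (simp add: inner_add_right)
    also have "\<dots> = c" unfolding c_def using a0 by (simp add: field_simps)
    finally show ?thesis .
  qed
  have G: "(\<Sum>n\<in>UNIV. (Y$n - X$n \<bullet> ts) *\<^sub>R X$n) + (y - x \<bullet> ts) *\<^sub>R x = 0"
  proof -
    have "(\<Sum>n\<in>UNIV. (Y$n - X$n \<bullet> ts) *\<^sub>R X$n) = transpose X *v (Y - X *v ts)"
      unfolding tX_sum by (simp add: Xv_comp)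
    also have "\<dots> = transpose X *v Y - ?A *v ts"
      by (simp add: matrix_vector_mult_diff_distrib matrix_vector_mul_assoc)
    finally show ?thesis unfolding Ats r by simp
  qed
  have min: "genie_loss X Y x y ts \<le> genie_loss X Y x y t" for t
    unfolding loss_decomp[OF G, of t] by (simp add: sum_nonneg)
  have uniq: "t = ts" if "genie_loss X Y x y t = genie_loss X Y x y ts" for t
  proof -
    define d where "d = ts - t"
    have "(\<Sum>n\<in>UNIV. (X$n \<bullet> d)\<^sup>2) + (x \<bullet> d)\<^sup>2 = 0"
      using loss_decomp[OF G, of t] that unfolding d_def by simp
    hence "(\<Sum>n\<in>UNIV. (X$n \<bullet> d)\<^sup>2) = 0"
      by (metis add_nonneg_nonneg sum_nonneg zero_le_power2 add_nonneg_eq_0_iff)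
    hence "\<forall>n\<in>UNIV. (X$n \<bullet> d)\<^sup>2 = 0" by (subst (asm) sum_nonneg_eq_0_iff) auto
    hence "X *v d = 0" by (simp add: vec_eq_iff Xv_comp)
    hence "?A *v d = 0" by (simp add: matrix_vector_mul_assoc[symmetric])
    hence "d = 0" using minv_v(2)[OF inv, of d] by simp
    thus ?thesis unfolding d_def by simp
  qed
  have "genie_loss X Y x y (genie X Y x y) = genie_loss X Y x y ts"
    unfolding genie_def by (rule arg_min_equality) (auto intro: min)
  hence "genie X Y x y = ts" by (rule uniq)
  thus "genie X Y x y = ls_estimate X Y + ((y - \<mu>) / (1 + a)) *\<^sub>R z" unfolding ts_def c_def .
qed

theorem mainTheorem1:
  fixes X :: "real^'m::finite^'n::finite" and Y :: "real^'n" and x :: "real^'m" and \<sigma> :: real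
  assumes "invertible (transpose X ** X)" and "\<sigma> > 0"
  defines "\<theta>N \<equiv> ls_estimate X Y" and "P \<equiv> P_mat X x"
  shows "(\<forall>y. y - x \<bullet> genie X Y x y = (1 - x \<bullet> (P *v x)) * (y - x \<bullet> \<theta>N))
    \<and> integrable lborel (\<lambda>y'. gauss_lik \<sigma> x (genie X Y x y') y')
    \<and> pnml_norm \<sigma> X Y x = 1 / (1 - x \<bullet> (P *v x))
    \<and> pnml_norm \<sigma> X Y x = 1 + x \<bullet> (matrix_inv (transpose X ** X) *v x)
    \<and> ln (pnml_norm \<sigma> X Y x) = ln (1 + x \<bullet> (matrix_inv (transpose X ** X) *v x))
    \<and> (\<forall>y. pnml \<sigma> X Y x y = (1 - x \<bullet> (P *v x)) / sqrt (2 * pi * \<sigma>\<^sup>2)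
             * exp (- ((1 - x \<bullet> (P *v x))\<^sup>2 / (2 * \<sigma>\<^sup>2)) * (y - x \<bullet> \<theta>N)\<^sup>2))
    \<and> (\<forall>y. pnml \<sigma> X Y x y = normal_density (x \<bullet> \<theta>N) (\<sigma> * pnml_norm \<sigma> X Y x) y)"
proof -
  define a where "a = x \<bullet> (matrix_inv (transpose X ** X) *v x)"
  define \<mu> where "\<mu> = x \<bullet> \<theta>N"
  define K where "K = 1 + a"
  have a0: "a \<ge> 0" unfolding a_def by (rule genie_formula(1)[OF assms(1)])
  have K0: "K > 0" unfolding K_def using a0 by simp
  have g: "genie X Y x y = \<theta>N + ((y - \<mu>) / K) *\<^sub>R (matrix_inv (transpose X ** X) *v x)" for y
    unfolding \<theta>N_def \<mu>_def K_def a_def by (rule genie_formula(2)[OF assms(1)])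
  have Px: "1 - x \<bullet> (P *v x) = 1 / K"
    unfolding P_def P_mat_def scaleR_matrix_vector_assoc[symmetric] inner_scaleR_right a_def[symmetric] K_def
    using a0 by (simp add: field_simps)
  have res: "y - x \<bullet> genie X Y x y = (y - \<mu>) / K" for y
    unfolding g inner_add_right inner_scaleR_right a_def[symmetric] \<mu>_def[symmetric]
    using K0 unfolding K_def by (simp add: field_simps)
  have gl: "gauss_lik \<sigma> x (genie X Y x y) y = K * normal_density \<mu> (\<sigma> * K) y" for y
  proof -
    have sq: "sqrt (2 * pi * (\<sigma> * K)\<^sup>2) = K * sqrt (2 * pi * \<sigma>\<^sup>2)"
      using K0 by (simp add: power_mult_distrib real_sqrt_mult)
    show ?thesis
      unfolding gauss_lik_def normal_density_def res sq
      using K0 assms(2) by (simp add: field_simps power_mult_distrib power_divide)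
  qed
  have int: "integrable lborel (\<lambda>y'. gauss_lik \<sigma> x (genie X Y x y') y')"
    unfolding gl using K0 assms(2) by (simp add: integrable_normal_density)
  have norm: "pnml_norm \<sigma> X Y x = K"
    unfolding pnml_norm_def gl using K0 assms(2) by (simp add: integral_normal_density)
  have pn: "pnml \<sigma> X Y x y = normal_density \<mu> (\<sigma> * K) y" for y
    unfolding pnml_def norm gl using K0 by simp
  have pn2: "pnml \<sigma> X Y x y = (1 / K) / sqrt (2 * pi * \<sigma>\<^sup>2)
             * exp (- ((1 / K)\<^sup>2 / (2 * \<sigma>\<^sup>2)) * (y - \<mu>)\<^sup>2)" for y
  proof -
    have sq: "sqrt (2 * pi * (\<sigma> * K)\<^sup>2) = K * sqrt (2 * pi * \<sigma>\<^sup>2)"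
      using K0 by (simp add: power_mult_distrib real_sqrt_mult)
    show ?thesis unfolding pn normal_density_def sq
      using K0 assms(2) by (simp add: field_simps power_mult_distrib power_divide)
  qed
  have r1: "\<forall>y. y - x \<bullet> genie X Y x y = (1 - x \<bullet> (P *v x)) * (y - x \<bullet> \<theta>N)"
    unfolding Px res \<mu>_def by simp
  have r2: "pnml_norm \<sigma> X Y x = 1 / (1 - x \<bullet> (P *v x))" unfolding Px norm by simp
  have r3: "\<forall>y. pnml \<sigma> X Y x y = (1 - x \<bullet> (P *v x)) / sqrt (2 * pi * \<sigma>\<^sup>2)
             * exp (- ((1 - x \<bullet> (P *v x))\<^sup>2 / (2 * \<sigma>\<^sup>2)) * (y - x \<bullet> \<theta>N)\<^sup>2)"
    unfolding Px using pn2 \<mu>_def by simp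
  have r4: "\<forall>y. pnml \<sigma> X Y x y = normal_density (x \<bullet> \<theta>N) (\<sigma> * pnml_norm \<sigma> X Y x) y"
    unfolding norm using pn \<mu>_def by simp
  show ?thesis using r1 r2 r3 r4 int norm unfolding K_def a_def by simp
qed

end
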